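(* Let $q>0$. If $L(q)$ contains a loop of odd length, then $1/q$ is an algebraic integer.
   Context: Let $q>0$. For an integer $k\ge0$ and $\mathbf m=(m_0,\dots,m_k)\in\mathbb Z^{k+1}$ put $\mathbf m_j=(m_0,\dots,m_j)$. Define $c(q,\mathbf m_0)=m_0$ and recursively $c(q,\mathbf m_j)=m_j+\frac{1}{q\,c(q,\mathbf m_{j-1})}$ for $1\le j\le k$. The vector $\mathbf m$ is a path for $q$ of length $k$ if $c(q,\mathbf m_j)\ne0$ for $0\le j\le k-1$. A loop is a path $\mathbf m$ with $c(q,\mathbf m)=0$, and $L(q)$ denotes the set of loops for $q$. *)

theory Defs
  imports Complex_Main "HOL-Computational_Algebra.Polynomial"
begin

(* crev q [m_j, m_{j-1}, ..., m_0] = c(q, (m_0,...,m_j)) *)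
fun crev :: "real \<Rightarrow> int list \<Rightarrow> real" where
  "crev q [] = 0"
| "crev q [x] = of_int x"
| "crev q (x # y # ys) = of_int x + 1 / (q * crev q (y # ys))"

definition c :: "real \<Rightarrow> int list \<Rightarrow> real" where
  "c q m = crev q (rev m)"

definition is_path :: "real \<Rightarrow> int list \<Rightarrow> bool" where
  "is_path q m \<longleftrightarrow> m \<noteq> [] \<and> (\<forall>j < length m - 1. c q (take (Suc j) m) \<noteq> 0)"

definition path_length :: "int list \<Rightarrow> nat" where
  "path_length m = length m - 1"

definition L :: "real \<Rightarrow> int list set" where
  "L q = {m. is_path q m \<and> c q m = 0}"

end

theory Submission
  imports Defs
begin

fun pr :: "int list \<Rightarrow> int poly \<times> int poly" where
  "pr [] = (1, 0)"
| "pr (x # ys) = ([:x:] * fst (pr ys) + pCons 0 (snd (pr ys)), fst (pr ys))"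

lemma pr_deg:
  "degree (fst (pr zs)) \<le> length zs div 2 \<and> degree (snd (pr zs)) \<le> (length zs - 1) div 2
   \<and> (even (length zs) \<longrightarrow> coeff (fst (pr zs)) (length zs div 2) = 1)
   \<and> (odd (length zs) \<longrightarrow> coeff (snd (pr zs)) (length zs div 2) = 1)"
proof (induction zs)
  case Nil
  then show ?case by simp
next
  case (Cons x ys)
  define n where "n = length ys"
  define a where "a = fst (pr ys)"
  define b where "b = snd (pr ys)"
  have IH: "degree a \<le> n div 2" "degree b \<le> (n - 1) div 2"
    "even n \<Longrightarrow> coeff a (n div 2) = 1" "odd n \<Longrightarrow> coeff b (n div 2) = 1"
    using Cons.IH unfolding n_def a_def b_def by auto
  have b0: "n = 0 \<Longrightarrow> b = 0" unfolding n_def b_def by simp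
  have d1: "degree ([:x:] * a) \<le> Suc n div 2"
    using IH(1) degree_mult_le[of "[:x:]" a] by simp
  have d2: "degree (pCons 0 b) \<le> Suc n div 2"
  proof (cases "n = 0")
    case True then show ?thesis using b0 by simp
  next
    case False
    have "degree (pCons 0 b) \<le> Suc (degree b)"
      by (cases "b = 0") auto
    then show ?thesis using IH(2) False by linarith
  qed
  have D: "degree ([:x:] * a + pCons 0 b) \<le> Suc n div 2"
    using degree_add_le[OF d1 d2] .
  have C1: "even (Suc n) \<Longrightarrow> coeff ([:x:] * a + pCons 0 b) (Suc n div 2) = 1"
  proof -
    assume e: "even (Suc n)"
    have "coeff a (Suc n div 2) = 0"
      using IH(1) e by (intro coeff_eq_0) presburger
    moreover have "Suc n div 2 = Suc (n div 2)" using e by presburger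
    moreover have "coeff b (n div 2) = 1" using IH(4) e by simp
    ultimately show ?thesis by (simp add: coeff_pCons)
  qed
  show ?case
    using D C1 IH(1,3) unfolding n_def a_def b_def by auto
qed

lemma pr_monic:
  assumes "even (length zs)"
  shows "lead_coeff (fst (pr zs)) = 1"
proof -
  have "degree (fst (pr zs)) = length zs div 2"
    using pr_deg[of zs] assms by (metis le_antisym le_degree zero_neq_one)
  then show ?thesis using pr_deg[of zs] assms by simp
qed

lemma mp_add: "map_poly (of_int :: int \<Rightarrow> real) (p + r) = map_poly of_int p + map_poly of_int r"
  by (rule poly_eqI) (simp add: coeff_map_poly)

lemma mp_mult_const: "map_poly (of_int :: int \<Rightarrow> real) ([:x:] * p) = [:of_int x:] * map_poly of_int p"
  by (rule poly_eqI) (simp add: coeff_map_poly)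

lemma pr_val:
  fixes q :: real
  assumes "zs \<noteq> []" "q \<noteq> 0"
    and "\<forall>n. 0 < n \<longrightarrow> n < length zs \<longrightarrow> crev q (drop n zs) \<noteq> 0"
  shows "poly (map_poly of_int (snd (pr zs))) (1/q) \<noteq> 0 \<and>
     crev q zs = poly (map_poly of_int (fst (pr zs))) (1/q) / poly (map_poly of_int (snd (pr zs))) (1/q)"
  using assms
proof (induction q zs rule: crev.induct)
  case (1 q)
  then show ?case by simp
next
  case (2 q x)
  then show ?case by (simp add: map_poly_pCons)
next
  case (3 q x y ys)
  define A :: real where "A = poly (map_poly of_int (fst (pr (y # ys)))) (1/q)"
  define B :: real where "B = poly (map_poly of_int (snd (pr (y # ys)))) (1/q)"
  have h: "\<forall>n. 0 < n \<longrightarrow> n < length (y # ys) \<longrightarrow> crev q (drop n (y # ys)) \<noteq> 0"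
  proof (intro allI impI)
    fix n assume "0 < n" "n < length (y # ys)"
    then show "crev q (drop n (y # ys)) \<noteq> 0"
      using "3.prems"(3)[rule_format, of "Suc n"] by simp
  qed
  have IH: "B \<noteq> 0" "crev q (y # ys) = A / B"
    using "3.IH"[OF _ "3.prems"(2) h] unfolding A_def B_def by auto
  have nz: "crev q (y # ys) \<noteq> 0"
    using "3.prems"(3)[rule_format, of 1] by simp
  then have A0: "A \<noteq> 0" using IH by auto
  have "crev q (x # y # ys) = of_int x + B / (q * A)"
    using IH by simp
  also have "\<dots> = (of_int x * A + (1/q) * B) / A"
    using A0 "3.prems"(2) by (simp add: field_simps)
  finally have "crev q (x # y # ys) = (of_int x * A + (1/q) * B) / A" .
  moreover have "poly (map_poly of_int (snd (pr (x # y # ys)))) (1/q) = A"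
    unfolding A_def by (simp only: pr.simps(2) snd_conv)
  moreover have "poly (map_poly of_int (fst (pr (x # y # ys)))) (1/q) = of_int x * A + (1/q) * B"
    unfolding A_def B_def
    by (simp only: pr.simps(2) fst_conv snd_conv mp_add mp_mult_const map_poly_pCons poly_add poly_mult
       poly_pCons of_int_0) simp
  ultimately show ?case using A0 by simp
qed

theorem corollary2:
  fixes q :: real
  assumes "q > 0"
    and "\<exists>m \<in> L q. odd (path_length m)"
  shows "algebraic_int (1 / q)"
proof -
  obtain m where m: "m \<in> L q" "odd (path_length m)" using assms(2) by blast
  have ne: "m \<noteq> []" and p: "\<forall>j < length m - 1. c q (take (Suc j) m) \<noteq> 0"
    and z: "c q m = 0"
    using m(1) unfolding L_def is_path_def by auto
  define zs where "zs = rev m"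
  have "zs \<noteq> []" using ne zs_def by simp
  have h: "\<forall>n. 0 < n \<longrightarrow> n < length zs \<longrightarrow> crev q (drop n zs) \<noteq> 0"
  proof (intro allI impI)
    fix n assume n: "0 < n" "n < length zs"
    have "drop n zs = rev (take (length m - n) m)"
      using n unfolding zs_def by (simp add: rev_take)
    moreover have "length m - n = Suc (length m - n - 1)" "length m - n - 1 < length m - 1"
      using n zs_def by auto
    ultimately show "crev q (drop n zs) \<noteq> 0"
      using p c_def by metis
  qed
  have ev: "even (length zs)"
    using m(2) ne unfolding zs_def path_length_def by (cases m) auto
  have "poly (map_poly of_int (fst (pr zs))) (1/q) = 0"
    using pr_val[OF \<open>zs \<noteq> []\<close> _ h] assms(1) z unfolding c_def zs_def by auto
  then show ?thesis
    using pr_monic[OF ev] algebraic_int_altdef_ipoly by blast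
qed

end
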